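(* Let $\mathcal{H}_A,\mathcal{H}_B$ be finite-dimensional Hilbert spaces with fixed reference bases and the product basis on $\mathcal{H}_A\otimes\mathcal{H}_B$. For every state $\rho_{AB}$ with reduced state $\rho_B$, $$C_f(\rho_{AB})\geq C^{A|B}_f(\rho_{AB})+C_f(\rho_B).$$
   Context: $S$ is the von Neumann entropy; for a system with reference basis, $\Delta$ denotes complete dephasing in that basis, and $\Delta_A=\Delta\otimes\mathrm{id}_B$ dephases only $A$. $C_f(\rho)=\min\sum_ip_iS(\Delta(|\psi_i\rangle\langle\psi_i|))$ over pure-state decompositions $\rho=\sum_ip_i|\psi_i\rangle\langle\psi_i|$ (product basis for $\rho_{AB}$). $C^{A|B}_f(\rho_{AB})=\min\sum_ip_iS(\Delta_A(|\psi_i\rangle\langle\psi_i|_{AB}))$ over pure-state decompositions of $\rho_{AB}$. *)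

theory Defs
  imports Complex_Main "Jordan_Normal_Form.Char_Poly"
begin

text \<open>Finite-dimensional quantum states as complex matrices (Jordan_Normal_Form).
  Reference basis of C^n: the standard basis. Product basis of C^dA (x) C^dB:
  basis vector |a>|b> has index a * dB + b.\<close>

definition mtrace :: "complex mat \<Rightarrow> complex" where
  "mtrace A = (\<Sum>i<dim_row A. A $$ (i, i))"

definition density_op :: "nat \<Rightarrow> complex mat \<Rightarrow> bool" where
  "density_op n \<rho> \<longleftrightarrow> \<rho> \<in> carrier_mat n n
     \<and> (\<forall>i<n. \<forall>j<n. \<rho> $$ (i, j) = cnj (\<rho> $$ (j, i)))
     \<and> (\<forall>v \<in> carrier_vec n. 0 \<le> Re (\<Sum>i<n. \<Sum>j<n. cnj (v $ i) * \<rho> $$ (i, j) * v $ j))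
     \<and> mtrace \<rho> = 1"

definition proj :: "nat \<Rightarrow> complex vec \<Rightarrow> complex mat" where
  "proj n \<psi> = mat n n (\<lambda>(i, j). \<psi> $ i * cnj (\<psi> $ j))"

definition dephase :: "complex mat \<Rightarrow> complex mat" where
  "dephase \<rho> = mat (dim_row \<rho>) (dim_col \<rho>) (\<lambda>(i, j). if i = j then \<rho> $$ (i, j) else 0)"

text \<open>Dephasing of subsystem A only: Delta (x) id_B in the product basis.\<close>
definition dephase_A :: "nat \<Rightarrow> nat \<Rightarrow> complex mat \<Rightarrow> complex mat" where
  "dephase_A dA dB \<rho> = mat (dA * dB) (dA * dB)
     (\<lambda>(i, j). if i div dB = j div dB then \<rho> $$ (i, j) else 0)"

definition ptrace_A :: "nat \<Rightarrow> nat \<Rightarrow> complex mat \<Rightarrow> complex mat" where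
  "ptrace_A dA dB \<rho> = mat dB dB (\<lambda>(b, b'). \<Sum>a<dA. \<rho> $$ (a * dB + b, a * dB + b'))"

text \<open>Von Neumann entropy (base 2): -sum over eigenvalues, counted with algebraic
  multiplicity as roots of the characteristic polynomial, of lambda log lambda
  (with 0 log 0 = 0).\<close>
definition eta :: "real \<Rightarrow> real" where
  "eta x = (if x \<le> 0 then 0 else x * log 2 x)"

definition vn_entropy :: "complex mat \<Rightarrow> real" where
  "vn_entropy \<rho> = - (\<Sum>z \<in> {z. poly (char_poly \<rho>) z = 0}.
       real (order z (char_poly \<rho>)) * eta (Re z))"

definition pure_decomp :: "nat \<Rightarrow> complex mat \<Rightarrow> nat \<Rightarrow> (nat \<Rightarrow> real) \<Rightarrow> (nat \<Rightarrow> complex vec) \<Rightarrow> bool" where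
  "pure_decomp n \<rho> k p \<psi> \<longleftrightarrow>
     (\<forall>i<k. 0 \<le> p i \<and> \<psi> i \<in> carrier_vec n \<and> (\<Sum>j<n. (cmod (\<psi> i $ j))\<^sup>2) = 1)
     \<and> (\<Sum>i<k. p i) = 1
     \<and> \<rho> = mat n n (\<lambda>(r, c). \<Sum>i<k. complex_of_real (p i) * (proj n (\<psi> i) $$ (r, c)))"

text \<open>Coherence of formation (minimum over decompositions, written as infimum).\<close>
definition Cf :: "nat \<Rightarrow> complex mat \<Rightarrow> real" where
  "Cf n \<rho> = Inf {(\<Sum>i<k. p i * vn_entropy (dephase (proj n (\<psi> i)))) | k p \<psi>. pure_decomp n \<rho> k p \<psi>}"

definition Cf_AB :: "nat \<Rightarrow> nat \<Rightarrow> complex mat \<Rightarrow> real" where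
  "Cf_AB dA dB \<rho> = Inf {(\<Sum>i<k. p i * vn_entropy (dephase_A dA dB (proj (dA * dB) (\<psi> i)))) | k p \<psi>.
       pure_decomp (dA * dB) \<rho> k p \<psi>}"

end

theory Submission
  imports Defs
begin

lemma order_lin: "order z [:-c, 1:] = (if z = c then 1 else (0::nat))"
proof (cases "z = c")
  case True then show ?thesis using order_power_n_n[of c 1] by simp
next
  case False then show ?thesis by (simp add: order_0I)
qed

lemma prod_lin_nz: "(\<Prod>c\<leftarrow>cs. [:-c,1:]) \<noteq> (0::complex poly)"
proof -
  have "\<And>c. [:-c,1:] \<noteq> (0::complex poly)" by simp
  then show ?thesis by (auto simp: prod_list_zero_iff simp del: pCons_eq_0_iff)
qed

lemma root_sum_aux:
  fixes f :: "complex \<Rightarrow> real"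
  shows "finite F \<Longrightarrow> set cs \<subseteq> F \<Longrightarrow>
    (\<Sum>z\<in>F. real (order z (\<Prod>c\<leftarrow>cs. [:-c,1:])) * f z) = (\<Sum>c\<leftarrow>cs. f c)"
proof (induction cs)
  case Nil then show ?case by simp
next
  case (Cons c cs)
  have nz: "(\<Prod>c\<leftarrow>cs. [:-c,1:]) \<noteq> (0::complex poly)"
    by (rule prod_lin_nz)
  have nz2: "[:-c,1:] * (\<Prod>c\<leftarrow>cs. [:-c,1:]) \<noteq> (0::complex poly)"
    using prod_lin_nz[of "c#cs"] by (simp only: list.map prod_list.Cons) simp
  have "(\<Sum>z\<in>F. real (order z (\<Prod>c\<leftarrow>c#cs. [:-c,1:])) * f z)
     = (\<Sum>z\<in>F. (if z = c then f z else 0) + real (order z (\<Prod>c\<leftarrow>cs. [:-c,1:])) * f z)"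
    by (intro sum.cong refl, simp only: list.map prod_list.Cons order_mult[OF nz2] order_lin)
       (simp add: algebra_simps)
  also have "\<dots> = f c + (\<Sum>c\<leftarrow>cs. f c)"
    using Cons by (simp add: sum.distrib)
  finally show ?case by simp
qed

lemma root_sum:
  fixes f :: "complex \<Rightarrow> real"
  shows "(\<Sum>z\<in>{z. poly (\<Prod>c\<leftarrow>cs. [:-c,1:]) z = 0}. real (order z (\<Prod>c\<leftarrow>cs. [:-c,1:])) * f z) = (\<Sum>c\<leftarrow>cs. f c)"
proof (rule root_sum_aux)
  have nz: "(\<Prod>c\<leftarrow>cs. [:-c,1:]) \<noteq> (0::complex poly)"
    by (rule prod_lin_nz)
  then show "finite {z. poly (\<Prod>c\<leftarrow>cs. [:-c,1:]) z = 0}" by (rule poly_roots_finite)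
  show "set cs \<subseteq> {z. poly (\<Prod>c\<leftarrow>cs. [:-c,1:]) z = 0}"
    by (induction cs) auto
qed

lemma vn_entropy_ut:
  assumes M: "M \<in> carrier_mat n n" and ut: "upper_triangular M"
    and d: "\<And>i. i < n \<Longrightarrow> M $$ (i,i) = complex_of_real (d i)"
  shows "vn_entropy M = - (\<Sum>i<n. eta (d i))"
proof -
  have cp: "char_poly M = (\<Prod>a\<leftarrow>diag_mat M. [:-a,1:])"
    by (rule char_poly_upper_triangular[OF M ut])
  have "vn_entropy M = - (\<Sum>a\<leftarrow>diag_mat M. eta (Re a))"
    unfolding vn_entropy_def cp by (subst root_sum) simp
  also have "(\<Sum>a\<leftarrow>diag_mat M. eta (Re a)) = (\<Sum>i<n. eta (d i))"
    using M d by (simp add: diag_mat_def comp_def sum_set_upt_conv_sum_list_nat[symmetric] lessThan_atLeast0)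
  finally show ?thesis .
qed

lemma vn_entropy_similar: "similar_mat A B \<Longrightarrow> vn_entropy A = vn_entropy B"
  unfolding vn_entropy_def by (simp add: char_poly_similar)

lemma div_blk: "b < (dB::nat) \<Longrightarrow> (x*dB+b) div dB = x"
  by simp

lemma sum_blocks: fixes dA dB :: nat shows "(\<Sum>k<dA*dB. f k) = (\<Sum>a<dA. \<Sum>b<dB. f (a*dB+b))"
proof -
  have "(\<Sum>k<dA*dB. f k) = (\<Sum>a<dA. sum f {a*dB..<a*dB+dB})"
    by (rule sum.nat_group[symmetric])
  also have "\<dots> = (\<Sum>a<dA. \<Sum>b<dB. f (a*dB+b))"
  proof (rule sum.cong[OF refl])
    fix a
    have "sum f {0 + a*dB..<dB + a*dB} = (\<Sum>i=0..<dB. f (i + a*dB))"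
      by (rule sum.shift_bounds_nat_ivl)
    then show "sum f {a*dB..<a*dB+dB} = (\<Sum>b<dB. f (a*dB+b))"
      by (simp add: add.commute atLeast0LessThan)
  qed
  finally show ?thesis .
qed

lemma block_sum:
  fixes dA dB :: nat assumes "a < dA"
  shows "(\<Sum>k<dA*dB. if k div dB = a then f k else 0) = (\<Sum>b<dB. f (a*dB+b))"
proof -
  have "(\<Sum>k<dA*dB. if k div dB = a then f k else 0)
      = (\<Sum>a'<dA. \<Sum>b<dB. if (a'*dB+b) div dB = a then f (a'*dB+b) else 0)"
    by (rule sum_blocks)
  also have "\<dots> = (\<Sum>a'<dA. if a' = a then (\<Sum>b<dB. f (a*dB+b)) else 0)"
    by (intro sum.cong refl) (auto simp: div_blk)
  also have "\<dots> = (\<Sum>b<dB. f (a*dB+b))" using assms by simp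
  finally show ?thesis .
qed

lemma cnj_sq: "z * cnj z = complex_of_real ((cmod z)\<^sup>2)"
  by (metis complex_norm_square)

lemma eta0[simp]: "eta 0 = 0" by (simp add: eta_def)

lemma mult_entry:
  assumes "A \<in> carrier_mat n m" "B \<in> carrier_mat m l" "r < n" "c < l"
  shows "(A * B) $$ (r,c) = (\<Sum>k<m. A $$ (r,k) * B $$ (k,c))"
  using assms by (auto simp: index_mult_mat scalar_prod_def lessThan_atLeast0 intro!: sum.cong)

lemma vn_dephaseA:
  fixes dA dB :: nat and \<psi> :: "complex vec"
  assumes psi: "\<psi> \<in> carrier_vec (dA*dB)"
  shows "vn_entropy (dephase_A dA dB (proj (dA*dB) \<psi>)) = - (\<Sum>a<dA. eta (\<Sum>b<dB. (cmod (\<psi> $ (a*dB+b)))\<^sup>2))"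
proof -
  define n where "n = dA*dB"
  define M where "M = dephase_A dA dB (proj (dA*dB) \<psi>)"
  define piv where "piv r \<longleftrightarrow> r < n \<and> \<psi>$r \<noteq> 0 \<and> (\<forall>r'<r. r' div dB = r div dB \<longrightarrow> \<psi>$r' = 0)" for r
  define q where "q a = (\<Sum>b<dB. (cmod (\<psi> $ (a*dB+b)))\<^sup>2)" for a
  define P where "P = mat n n (\<lambda>(r,c). if piv c then (if r div dB = c div dB then \<psi>$r else 0) else (if r = c then 1 else 0))"
  define R where "R = mat n n (\<lambda>(r,c). if piv r \<and> r div dB = c div dB then (if c = r then complex_of_real (q (r div dB)) else cnj (\<psi>$c)) else 0)"
  have blk_lt: "k div dB < dA" if "k < n" for k
    using that unfolding n_def by (simp add: less_mult_imp_div_less)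
  have Mc: "M \<in> carrier_mat n n" by (simp add: M_def dephase_A_def n_def)
  have Pc: "P \<in> carrier_mat n n" by (simp add: P_def)
  have Rc: "R \<in> carrier_mat n n" by (simp add: R_def)
  have M_ent: "M $$ (r,c) = (if r div dB = c div dB then \<psi>$r * cnj (\<psi>$c) else 0)"
    if "r < n" "c < n" for r c
    using that by (simp add: M_def dephase_A_def proj_def n_def)
  have P_ent: "P $$ (r,c) = (if piv c then (if r div dB = c div dB then \<psi>$r else 0) else (if r = c then 1 else 0))"
    if "r < n" "c < n" for r c
    using that by (simp add: P_def)
  have R_ent: "R $$ (r,c) = (if piv r \<and> r div dB = c div dB then (if c = r then complex_of_real (q (r div dB)) else cnj (\<psi>$c)) else 0)"
    if "r < n" "c < n" for r c
    using that by (simp add: R_def)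
  have piv_unique: "k = k'" if "piv k" "piv k'" "k div dB = k' div dB" for k k'
    using that unfolding piv_def by (metis linorder_neqE_nat)
  have piv_ex: "\<exists>k. piv k \<and> k div dB = c div dB" if "c < n" "\<psi>$c \<noteq> 0" for c
  proof -
    define k where "k = (LEAST k. \<psi>$k \<noteq> 0 \<and> k div dB = c div dB)"
    have k1: "\<psi>$k \<noteq> 0 \<and> k div dB = c div dB"
      unfolding k_def by (rule LeastI[of _ c]) (use that in auto)
    have k2: "k \<le> c"
      unfolding k_def by (rule Least_le) (use that in auto)
    have k3: "\<psi>$r' = 0" if "r' < k" "r' div dB = k div dB" for r'
      using not_less_Least[OF that(1)[unfolded k_def]] that(2) k1 by (auto simp: k_def)
    have "piv k" unfolding piv_def using k1 k2 k3 \<open>c < n\<close> by auto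
    then show ?thesis using k1 by auto
  qed
  have qc: "(\<Sum>j<n. if j div dB = k div dB then \<psi>$j * cnj(\<psi>$j) else 0) = complex_of_real (q (k div dB))"
    if "k < n" for k
    unfolding n_def q_def using block_sum[OF blk_lt[OF that], of dB "\<lambda>j. \<psi>$j * cnj(\<psi>$j)"]
    by (simp add: cnj_sq n_def)
  have MP_PR: "M * P = P * R"
  proof (rule eq_matI)
    show "dim_row (M * P) = dim_row (P * R)" "dim_col (M * P) = dim_col (P * R)"
      using Mc Pc Rc by auto
    fix r c assume "r < dim_row (P * R)" "c < dim_col (P * R)"
    then have r: "r < n" and c: "c < n" using Pc Rc by auto
    have L: "(M*P) $$ (r,c) = (\<Sum>k<n. M $$ (r,k) * P $$ (k,c))" by (rule mult_entry[OF Mc Pc r c])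
    have Rr: "(P*R) $$ (r,c) = (\<Sum>k<n. P $$ (r,k) * R $$ (k,c))" by (rule mult_entry[OF Pc Rc r c])
    show "(M * P) $$ (r, c) = (P * R) $$ (r, c)"
    proof (cases "piv c")
      case True
      have "(\<Sum>k<n. M $$ (r,k) * P $$ (k,c)) = (\<Sum>k<n. (if r div dB = c div dB then \<psi>$r else 0) * (if k div dB = c div dB then \<psi>$k * cnj(\<psi>$k) else 0))"
        using r c True by (intro sum.cong refl) (auto simp: M_ent P_ent)
      also have "\<dots> = (if r div dB = c div dB then \<psi>$r else 0) * complex_of_real (q (c div dB))"
        by (simp add: sum_distrib_left[symmetric] qc[OF c])
      finally have 1: "(M*P) $$ (r,c) = \<dots>" using L by simp
      have "(\<Sum>k<n. P $$ (r,k) * R $$ (k,c)) = (\<Sum>k<n. if k = c then P $$ (r,c) * R $$ (c,c) else 0)"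
      proof (intro sum.cong refl)
        fix k assume "k \<in> {..<n}"
        then have k: "k < n" by simp
        show "P $$ (r,k) * R $$ (k,c) = (if k = c then P $$ (r,c) * R $$ (c,c) else 0)"
          using piv_unique[of k c] True k c by (auto simp: R_ent)
      qed
      also have "\<dots> = (if r div dB = c div dB then \<psi>$r else 0) * complex_of_real (q (c div dB))"
        using c r True by (simp add: P_ent R_ent)
      finally show ?thesis using 1 Rr by simp
    next
      case False
      have "(\<Sum>k<n. M $$ (r,k) * P $$ (k,c)) = (\<Sum>k<n. if k = c then M $$ (r,c) else 0)"
        using False r c by (intro sum.cong refl) (auto simp: P_ent)
      then have 1: "(M*P) $$ (r,c) = M $$ (r,c)" using L c by simp
      show ?thesis
      proof (cases "\<psi>$c = 0")
        case True
        have "(\<Sum>k<n. P $$ (r,k) * R $$ (k,c)) = 0"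
          using True False r c by (intro sum.neutral) (auto simp: R_ent)
        then show ?thesis using 1 Rr True r c by (simp add: M_ent)
      next
        case nz: False
        obtain k0 where k0: "piv k0" "k0 div dB = c div dB" using piv_ex[OF c nz] by blast
        have k0n: "k0 < n" and k0c: "k0 \<noteq> c" using k0 False unfolding piv_def by auto
        have "(\<Sum>k<n. P $$ (r,k) * R $$ (k,c)) = (\<Sum>k<n. if k = k0 then P $$ (r,k0) * R $$ (k0,c) else 0)"
        proof (intro sum.cong refl)
          fix k assume "k \<in> {..<n}"
          then have k: "k < n" by simp
          show "P $$ (r,k) * R $$ (k,c) = (if k = k0 then P $$ (r,k0) * R $$ (k0,c) else 0)"
          proof (cases "k = k0")
            case False
            have "\<not> (piv k \<and> k div dB = c div dB)"
              using piv_unique[of k k0] k0 False by auto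
            then have "R $$ (k,c) = 0" by (auto simp: R_ent[OF k c])
            then show ?thesis using False by simp
          qed simp
        qed
        also have "\<dots> = M $$ (r,c)"
          using k0n k0 k0c r c by (simp add: P_ent R_ent M_ent)
        finally show ?thesis using 1 Rr by simp
      qed
    qed
  qed
  have utR: "upper_triangular R"
  proof (rule upper_triangularI)
    fix i j assume ji: "j < i" and i: "i < dim_row R"
    then have "i < n" "j < n" using Rc by auto
    then show "R $$ (i,j) = 0" using ji unfolding R_ent[OF \<open>i<n\<close> \<open>j<n\<close>] piv_def by auto
  qed
  have detP: "det P \<noteq> 0"
  proof -
    have "det P = prod_list (diag_mat P)"
    proof (rule det_lower_triangular[OF _ Pc])
      fix i j assume "i < j" "j < n"
      then show "P $$ (i,j) = 0" unfolding P_ent[OF \<open>i<j\<close>[THEN less_trans, OF \<open>j<n\<close>] \<open>j<n\<close>] piv_def by auto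
    qed
    moreover have "0 \<notin> set (diag_mat P)"
      using Pc by (auto simp: diag_mat_def P_ent piv_def)
    ultimately show ?thesis by (simp add: prod_list_zero_iff)
  qed
  from det_non_zero_imp_unit[OF Pc detP, of "()"]
  obtain Q where Qc: "Q \<in> carrier_mat n n" and QP: "Q * P = 1\<^sub>m n" and PQ: "P * Q = 1\<^sub>m n"
    unfolding Units_def ring_mat_def by auto
  have "M = M * (P * Q)" using Mc PQ by simp
  also have "\<dots> = (M * P) * Q" using Mc Pc Qc by (simp add: assoc_mult_mat)
  also have "\<dots> = P * R * Q" unfolding MP_PR ..
  finally have MPRQ: "M = P * R * Q" .
  have sim: "similar_mat M R"
    unfolding similar_mat_def using similar_mat_witI[OF PQ QP MPRQ Mc Rc Pc Qc] by blast
  define d where "d r = (if piv r then q (r div dB) else 0)" for r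
  have "vn_entropy R = - (\<Sum>r<n. eta (d r))"
    by (rule vn_entropy_ut[OF Rc utR]) (simp add: R_ent d_def)
  also have "(\<Sum>r<n. eta (d r)) = (\<Sum>a<dA. eta (q a))"
  proof -
    have "(\<Sum>r<n. eta (d r)) = (\<Sum>a<dA. \<Sum>b<dB. eta (d (a*dB+b)))"
      unfolding n_def by (rule sum_blocks)
    also have "\<dots> = (\<Sum>a<dA. eta (q a))"
    proof (rule sum.cong[OF refl])
      fix a assume "a \<in> {..<dA}"
      then have a: "a < dA" by simp
      have inb: "a*dB+b < n" if "b < dB" for b
      proof -
        have "a*dB+b < a*dB+dB" using that by simp
        also have "\<dots> = (a+1)*dB" by simp
        also have "\<dots> \<le> dA*dB" using a by (intro mult_right_mono) auto
        finally show ?thesis by (simp add: n_def)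
      qed
      show "(\<Sum>b<dB. eta (d (a*dB+b))) = eta (q a)"
      proof (cases "\<exists>b<dB. \<psi>$(a*dB+b) \<noteq> 0")
        case True
        then obtain b0 where b0: "b0 < dB" "\<psi>$(a*dB+b0) \<noteq> 0" by blast
        obtain k0 where k0: "piv k0" "k0 div dB = (a*dB+b0) div dB"
          using piv_ex[OF inb[OF b0(1)] b0(2)] by blast
        then have k0: "piv k0" "k0 div dB = a" unfolding div_blk[OF b0(1)] by auto
        define b1 where "b1 = k0 mod dB"
        have b1: "b1 < dB" using b0 by (simp add: b1_def)
        have k0e: "k0 = a*dB+b1" using k0(2) unfolding b1_def by (metis div_mult_mod_eq mult.commute)
        have "(\<Sum>b<dB. eta (d (a*dB+b))) = (\<Sum>b<dB. if b = b1 then eta (q a) else 0)"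
        proof (intro sum.cong refl)
          fix b assume "b \<in> {..<dB}"
          then have b: "b < dB" by simp
          show "eta (d (a*dB+b)) = (if b = b1 then eta (q a) else 0)"
          proof (cases "b = b1")
            case True
            then have "a*dB+b = k0" using k0e by simp
            then show ?thesis using True k0 by (simp add: d_def)
          next
            case False
            have "\<not> piv (a*dB+b)"
            proof
              assume "piv (a*dB+b)"
              then have "a*dB+b = k0" using piv_unique[of "a*dB+b" k0] k0 div_blk[OF b, of a] by simp
              then show False using False k0e by simp
            qed
            then show ?thesis using False by (simp add: d_def)
          qed
        qed
        then show ?thesis using b1 by simp
      next
        case False
        then have "q a = 0" unfolding q_def by simp
        moreover have "\<not> piv (a*dB+b)" if "b < dB" for b
          using False that unfolding piv_def by auto
        ultimately show ?thesis by (simp add: d_def)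
      qed
    qed
    finally show ?thesis .
  qed
  finally have "vn_entropy R = - (\<Sum>a<dA. eta (q a))" .
  then have "vn_entropy M = - (\<Sum>a<dA. eta (q a))" using vn_entropy_similar[OF sim] by simp
  then show ?thesis unfolding M_def q_def .
qed

lemma vn_dephase:
  assumes psi: "\<psi> \<in> carrier_vec n"
  shows "vn_entropy (dephase (proj n \<psi>)) = - (\<Sum>r<n. eta ((cmod (\<psi>$r))\<^sup>2))"
proof (rule vn_entropy_ut)
  show "dephase (proj n \<psi>) \<in> carrier_mat n n" by (simp add: dephase_def proj_def)
  show "upper_triangular (dephase (proj n \<psi>))"
    by (rule upper_triangularI) (simp add: dephase_def proj_def)
  fix i assume "i < n"
  then show "dephase (proj n \<psi>) $$ (i, i) = complex_of_real ((cmod (\<psi>$i))\<^sup>2)"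
    by (simp add: dephase_def proj_def cnj_sq)
qed

lemma eta_split:
  fixes x :: "nat \<Rightarrow> real"
  assumes x: "\<And>b. b < m \<Longrightarrow> 0 \<le> x b" and q: "q = (\<Sum>b<m. x b)" and qp: "0 < q"
  shows "(\<Sum>b<m. eta (x b)) = eta q + q * (\<Sum>b<m. eta (x b / q))"
proof -
  have "q * eta (x b / q) = eta (x b) - x b * log 2 q" if "b < m" for b
  proof (cases "x b = 0")
    case True then show ?thesis by simp
  next
    case False
    then have "0 < x b" using x[OF that] by simp
    then show ?thesis using qp by (simp add: eta_def log_divide field_simps)
  qed
  then have "q * (\<Sum>b<m. eta (x b / q)) = (\<Sum>b<m. eta (x b)) - (\<Sum>b<m. x b) * log 2 q"
    by (simp add: sum_distrib_left sum_distrib_right sum_subtractf)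
  then show ?thesis using qp q by (simp add: eta_def)
qed

lemma eta_nonpos: "0 \<le> x \<Longrightarrow> x \<le> 1 \<Longrightarrow> eta x \<le> 0"
  by (auto simp: eta_def mult_nonneg_nonpos)

lemma inb: fixes a b dA dB :: nat shows "a < dA \<Longrightarrow> b < dB \<Longrightarrow> a*dB+b < dA*dB"
proof -
  assume a: "a < dA" and b: "b < dB"
  have "a*dB+b < a*dB+dB" using b by simp
  also have "\<dots> = (a+1)*dB" by simp
  also have "\<dots> \<le> dA*dB" using a by (intro mult_right_mono) auto
  finally show ?thesis .
qed

lemma norm_sum_blocks:
  fixes dA dB :: nat
  shows "(\<Sum>a<dA. \<Sum>b<dB. (cmod (\<psi> $ (a*dB+b)))\<^sup>2) = (\<Sum>r<dA*dB. (cmod (\<psi> $ r))\<^sup>2)"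
  by (rule sum_blocks[symmetric])

lemma decomp_split:
  fixes dA dB :: nat
  assumes dA: "0 < dA" and dB: "0 < dB"
    and D: "pure_decomp (dA*dB) \<rho> k p \<psi>"
  shows "\<exists>k' p' \<psi>'. pure_decomp dB (ptrace_A dA dB \<rho>) k' p' \<psi>' \<and>
     (\<Sum>i<k. p i * vn_entropy (dephase (proj (dA*dB) (\<psi> i)))) =
     (\<Sum>i<k. p i * vn_entropy (dephase_A dA dB (proj (dA*dB) (\<psi> i)))) +
     (\<Sum>i<k'. p' i * vn_entropy (dephase (proj dB (\<psi>' i))))"
proof -
  define n where "n = dA*dB"
  define q where "q i a = (\<Sum>b<dB. (cmod (\<psi> i $ (a*dB+b)))\<^sup>2)" for i a
  define \<phi> where "\<phi> i a = (if 0 < q i a then vec dB (\<lambda>b. \<psi> i $ (a*dB+b) / complex_of_real (sqrt (q i a)))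
      else unit_vec dB 0)" for i a
  define k' where "k' = k*dA"
  define p' where "p' m = p (m div dA) * q (m div dA) (m mod dA)" for m
  define \<psi>' where "\<psi>' m = \<phi> (m div dA) (m mod dA)" for m
  have psi: "\<psi> i \<in> carrier_vec n" "(\<Sum>r<n. (cmod (\<psi> i $ r))\<^sup>2) = 1" "0 \<le> p i" if "i < k" for i
    using D that unfolding pure_decomp_def n_def by auto
  have psum: "(\<Sum>i<k. p i) = 1" using D unfolding pure_decomp_def by auto
  have rho: "\<rho> = mat n n (\<lambda>(r, c). \<Sum>i<k. complex_of_real (p i) * (proj n (\<psi> i) $$ (r, c)))"
    using D unfolding pure_decomp_def n_def by auto
  have q_nn: "0 \<le> q i a" for i a unfolding q_def by (simp add: sum_nonneg)
  have q_sum: "(\<Sum>a<dA. q i a) = 1" if "i < k" for i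
    using psi(2)[OF that] unfolding q_def n_def norm_sum_blocks .
  have x0: "\<psi> i $ (a*dB+b) = 0" if "q i a = 0" "b < dB" for i a b
  proof -
    have "(cmod (\<psi> i $ (a*dB+b)))\<^sup>2 = 0"
      using that sum_nonneg_eq_0_iff[of "{..<dB}" "\<lambda>b. (cmod (\<psi> i $ (a*dB+b)))\<^sup>2"]
      unfolding q_def by auto
    then show ?thesis by simp
  qed
  have phi_ent: "\<phi> i a $ b = \<psi> i $ (a*dB+b) / complex_of_real (sqrt (q i a))" if "0 < q i a" "b < dB" for i a b
    using that by (simp add: \<phi>_def)
  have phi_c: "\<phi> i a \<in> carrier_vec dB" for i a by (simp add: \<phi>_def)
  have phi_sq: "(cmod (\<phi> i a $ b))\<^sup>2 = (cmod (\<psi> i $ (a*dB+b)))\<^sup>2 / q i a" if "0 < q i a" "b < dB" for i a b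
    using that q_nn[of i a] by (simp add: phi_ent norm_divide power_divide)
  have phi_norm: "(\<Sum>b<dB. (cmod (\<phi> i a $ b))\<^sup>2) = 1" for i a
  proof (cases "0 < q i a")
    case True
    then have "(\<Sum>b<dB. (cmod (\<phi> i a $ b))\<^sup>2) = (\<Sum>b<dB. (cmod (\<psi> i $ (a*dB+b)))\<^sup>2 / q i a)"
      by (intro sum.cong refl) (simp add: phi_sq)
    also have "\<dots> = 1" using True by (simp add: sum_divide_distrib[symmetric] q_def)
    finally show ?thesis .
  next
    case False
    then have "(\<Sum>b<dB. (cmod (\<phi> i a $ b))\<^sup>2) = (\<Sum>b<dB. if b = 0 then 1 else 0)"
      by (intro sum.cong refl) (simp add: \<phi>_def)
    then show ?thesis using dB by simp
  qed
  have divmod: "(i*dA+a) div dA = i" "(i*dA+a) mod dA = a" if "a < dA" for i a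
    using that by auto
  have reidx: "(\<Sum>m<k'. f m) = (\<Sum>i<k. \<Sum>a<dA. f (i*dA+a))" for f :: "nat \<Rightarrow> 'x::comm_monoid_add"
    unfolding k'_def by (rule sum_blocks)
  have PD: "pure_decomp dB (ptrace_A dA dB \<rho>) k' p' \<psi>'"
    unfolding pure_decomp_def
  proof (intro conjI allI impI)
    fix m assume m: "m < k'"
    have "m div dA < k" using m unfolding k'_def by (simp add: less_mult_imp_div_less)
    then show "0 \<le> p' m" unfolding p'_def using psi(3) q_nn by simp
    show "\<psi>' m \<in> carrier_vec dB" unfolding \<psi>'_def by (rule phi_c)
    show "(\<Sum>j<dB. (cmod (\<psi>' m $ j))\<^sup>2) = 1" unfolding \<psi>'_def by (rule phi_norm)
  next
    have "(\<Sum>m<k'. p' m) = (\<Sum>i<k. \<Sum>a<dA. p i * q i a)"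
      unfolding reidx by (intro sum.cong refl) (simp add: p'_def divmod)
    also have "\<dots> = (\<Sum>i<k. p i)"
      by (intro sum.cong refl) (simp add: sum_distrib_left[symmetric] q_sum)
    finally show "(\<Sum>m<k'. p' m) = 1" using psum by simp
  next
    show "ptrace_A dA dB \<rho> = mat dB dB (\<lambda>(r, c). \<Sum>m<k'. complex_of_real (p' m) * proj dB (\<psi>' m) $$ (r, c))"
    proof (rule eq_matI)
      fix r c assume "r < dim_row (mat dB dB (\<lambda>(r, c). \<Sum>m<k'. complex_of_real (p' m) * proj dB (\<psi>' m) $$ (r, c)))"
        "c < dim_col (mat dB dB (\<lambda>(r, c). \<Sum>m<k'. complex_of_real (p' m) * proj dB (\<psi>' m) $$ (r, c)))"
      then have r: "r < dB" and c: "c < dB" by auto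
      have trm: "complex_of_real (q i a) * (\<phi> i a $ r * cnj (\<phi> i a $ c))
          = \<psi> i $ (a*dB+r) * cnj (\<psi> i $ (a*dB+c))" for i a
      proof (cases "0 < q i a")
        case True
        have s: "complex_of_real (sqrt (q i a)) * complex_of_real (sqrt (q i a)) = complex_of_real (q i a)"
          using q_nn[of i a] by (simp flip: of_real_mult)
        have nz: "complex_of_real (sqrt (q i a)) \<noteq> 0" using True by simp
        show ?thesis using nz r c True
          by (simp add: phi_ent s[symmetric] field_simps)
      next
        case False
        then have "q i a = 0" using q_nn[of i a] by simp
        then show ?thesis using x0 r by simp
      qed
      have "ptrace_A dA dB \<rho> $$ (r,c) = (\<Sum>a<dA. \<rho> $$ (a*dB+r, a*dB+c))"
        using r c by (simp add: ptrace_A_def)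
      also have "\<dots> = (\<Sum>a<dA. \<Sum>i<k. complex_of_real (p i) * (\<psi> i $ (a*dB+r) * cnj (\<psi> i $ (a*dB+c))))"
      proof (intro sum.cong refl)
        fix a assume "a \<in> {..<dA}"
        then have a: "a < dA" by simp
        have "a*dB+r < n" "a*dB+c < n" using inb[OF a r] inb[OF a c] by (auto simp: n_def)
        then show "\<rho> $$ (a*dB+r, a*dB+c) = (\<Sum>i<k. complex_of_real (p i) * (\<psi> i $ (a*dB+r) * cnj (\<psi> i $ (a*dB+c))))"
          by (subst rho) (simp add: proj_def)
      qed
      also have "\<dots> = (\<Sum>i<k. \<Sum>a<dA. complex_of_real (p i * q i a) * (\<phi> i a $ r * cnj (\<phi> i a $ c)))"
        by (subst sum.swap) (simp add: trm mult.assoc)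
      also have "\<dots> = (\<Sum>m<k'. complex_of_real (p' m) * proj dB (\<psi>' m) $$ (r, c))"
        unfolding reidx using r c by (intro sum.cong refl) (simp add: p'_def \<psi>'_def divmod proj_def phi_c)
      finally show "ptrace_A dA dB \<rho> $$ (r,c) = mat dB dB (\<lambda>(r, c). \<Sum>m<k'. complex_of_real (p' m) * proj dB (\<psi>' m) $$ (r, c)) $$ (r,c)"
        using r c by simp
    qed (auto simp: ptrace_A_def)
  qed
  have ent: "vn_entropy (dephase (proj n (\<psi> i))) = vn_entropy (dephase_A dA dB (proj n (\<psi> i)))
      + (\<Sum>a<dA. q i a * vn_entropy (dephase (proj dB (\<phi> i a))))" if i: "i < k" for i
  proof -
    have e1: "vn_entropy (dephase (proj n (\<psi> i))) = - (\<Sum>a<dA. \<Sum>b<dB. eta ((cmod (\<psi> i $ (a*dB+b)))\<^sup>2))"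
      using vn_dephase[OF psi(1)[OF i]] unfolding n_def sum_blocks by simp
    have e2: "vn_entropy (dephase_A dA dB (proj n (\<psi> i))) = - (\<Sum>a<dA. eta (q i a))"
      using vn_dephaseA[of "\<psi> i" dA dB] psi(1)[OF i] unfolding n_def q_def by simp
    have e3: "vn_entropy (dephase (proj dB (\<phi> i a))) = - (\<Sum>b<dB. eta ((cmod (\<phi> i a $ b))\<^sup>2))" for a
      by (rule vn_dephase[OF phi_c])
    have blk: "(\<Sum>b<dB. eta ((cmod (\<psi> i $ (a*dB+b)))\<^sup>2)) = eta (q i a) + q i a * (\<Sum>b<dB. eta ((cmod (\<phi> i a $ b))\<^sup>2))" for a
    proof (cases "0 < q i a")
      case True
      have "(\<Sum>b<dB. eta ((cmod (\<psi> i $ (a*dB+b)))\<^sup>2)) = eta (q i a) + q i a * (\<Sum>b<dB. eta ((cmod (\<psi> i $ (a*dB+b)))\<^sup>2 / q i a))"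
        by (rule eta_split) (use True in \<open>auto simp: q_def\<close>)
      also have "(\<Sum>b<dB. eta ((cmod (\<psi> i $ (a*dB+b)))\<^sup>2 / q i a)) = (\<Sum>b<dB. eta ((cmod (\<phi> i a $ b))\<^sup>2))"
        using True by (intro sum.cong refl) (simp add: phi_sq)
      finally show ?thesis .
    next
      case False
      then have "q i a = 0" using q_nn[of i a] by simp
      then show ?thesis using x0 by simp
    qed
    show ?thesis unfolding e1 e2 e3
      by (simp add: blk sum.distrib sum_negf sum_distrib_left)
  qed
  have "(\<Sum>i<k. p i * vn_entropy (dephase (proj n (\<psi> i)))) =
     (\<Sum>i<k. p i * vn_entropy (dephase_A dA dB (proj n (\<psi> i)))) +
     (\<Sum>i<k. \<Sum>a<dA. (p i * q i a) * vn_entropy (dephase (proj dB (\<phi> i a))))"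
    by (simp add: ent sum.distrib distrib_left sum_distrib_left mult.assoc)
  also have "(\<Sum>i<k. \<Sum>a<dA. (p i * q i a) * vn_entropy (dephase (proj dB (\<phi> i a))))
      = (\<Sum>m<k'. p' m * vn_entropy (dephase (proj dB (\<psi>' m))))"
    unfolding reidx by (intro sum.cong refl) (simp add: p'_def \<psi>'_def divmod)
  finally show ?thesis using PD unfolding n_def by blast
qed

definition qf :: "nat \<Rightarrow> (nat \<Rightarrow> nat \<Rightarrow> complex) \<Rightarrow> (nat \<Rightarrow> complex) \<Rightarrow> complex" where
  "qf n M x = (\<Sum>i<n. \<Sum>j<n. cnj (x i) * M i j * x j)"

definition herm :: "nat \<Rightarrow> (nat \<Rightarrow> nat \<Rightarrow> complex) \<Rightarrow> bool" where
  "herm n M \<longleftrightarrow> (\<forall>i<n. \<forall>j<n. M i j = cnj (M j i))"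

definition psd :: "nat \<Rightarrow> (nat \<Rightarrow> nat \<Rightarrow> complex) \<Rightarrow> bool" where
  "psd n M \<longleftrightarrow> (\<forall>x. 0 \<le> Re (qf n M x))"

lemma qf_shift:
  assumes H: "herm n M" and m: "m < n"
  shows "qf n M (\<lambda>i. x i + (if i = m then t else 0)) =
    qf n M x + cnj t * (\<Sum>j<n. M m j * x j) + t * cnj (\<Sum>j<n. M m j * x j) + cnj t * t * M m m"
proof -
  have tm: "cnj (x i + (if i = m then t else 0)) * M i j * (x j + (if j = m then t else 0)) =
     cnj (x i) * M i j * x j + (if j = m then cnj (x i) * M i j * t else 0)
        + (if i = m then cnj t * M i j * x j else 0) + (if i = m \<and> j = m then cnj t * M i j * t else 0)" for i j
    by (cases "i = m"; cases "j = m") (simp_all add: algebra_simps)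
  have d1: "(\<Sum>i<n. \<Sum>j<n. if i = m then f i j else 0) = (\<Sum>j<n. f m j)" for f :: "nat \<Rightarrow> nat \<Rightarrow> complex"
  proof -
    have "(\<Sum>j<n. if i = m then f i j else 0) = (if i = m then (\<Sum>j<n. f i j) else 0)" for i by simp
    then show ?thesis using m by simp
  qed
  have d2: "(\<Sum>i<n. \<Sum>j<n. if i = m \<and> j = m then f i j else 0) = f m m" for f :: "nat \<Rightarrow> nat \<Rightarrow> complex"
  proof -
    have "(\<Sum>j<n. if i = m \<and> j = m then f i j else 0) = (if i = m then f i m else 0)" for i
      using m by (cases "i = m") simp_all
    then show ?thesis using m by simp
  qed
  have d3: "(\<Sum>i<n. \<Sum>j<n. if j = m then f i j else 0) = (\<Sum>i<n. f i m)" for f :: "nat \<Rightarrow> nat \<Rightarrow> complex"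
    using m by simp
  have "qf n M (\<lambda>i. x i + (if i = m then t else 0)) =
     (\<Sum>i<n. \<Sum>j<n. cnj (x i) * M i j * x j + (if j = m then cnj (x i) * M i j * t else 0)
        + (if i = m then cnj t * M i j * x j else 0) + (if i = m \<and> j = m then cnj t * M i j * t else 0))"
    unfolding qf_def tm ..
  also have "\<dots> = qf n M x + (\<Sum>i<n. cnj (x i) * M i m * t) + (\<Sum>j<n. cnj t * M m j * x j) + cnj t * M m m * t"
    by (simp only: sum.distrib d1 d2 d3 qf_def)
  also have "(\<Sum>i<n. cnj (x i) * M i m * t) = t * cnj (\<Sum>j<n. M m j * x j)"
  proof -
    have "(\<Sum>i<n. cnj (x i) * M i m * t) = (\<Sum>i<n. t * cnj (M m i * x i))"
    proof (intro sum.cong refl)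
      fix i assume "i \<in> {..<n}"
      then have "M i m = cnj (M m i)" using H m unfolding herm_def by blast
      then show "cnj (x i) * M i m * t = t * cnj (M m i * x i)" by simp
    qed
    then show ?thesis by (simp add: sum_distrib_left)
  qed
  also have "(\<Sum>j<n. cnj t * M m j * x j) = cnj t * (\<Sum>j<n. M m j * x j)"
    by (simp add: sum_distrib_left algebra_simps)
  finally show ?thesis by (simp add: algebra_simps)
qed

lemma peel_step_pos:
  assumes H: "herm n M" and P: "psd n M" and m: "m < n" and a: "0 < Re (M m m)"
  defines "A \<equiv> complex_of_real (Re (M m m))"
  defines "M' \<equiv> \<lambda>i j. M i j - M i m * cnj (M j m) / A"
  shows "herm n M'" "psd n M'"
proof -
  have "M m m = cnj (M m m)" using H m unfolding herm_def by blast
  then have "Im (M m m) = 0" by (metis cnj.simps(2) neg_equal_zero)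
  then have Mmm: "M m m = A" unfolding A_def by (simp add: complex_eq_iff)
  have Anz: "A \<noteq> 0" using a unfolding A_def by (simp add: complex_eq_iff)
  have cA: "cnj A = A" unfolding A_def by simp
  show "herm n M'" unfolding herm_def
  proof (intro allI impI)
    fix i j assume "i < n" "j < n"
    then have "M i j = cnj (M j i)" "M i m = cnj (M m i)" "M j m = cnj (M m j)" using H m unfolding herm_def by blast+
    then show "M' i j = cnj (M' j i)" unfolding M'_def by (simp add: cA)
  qed
  show "psd n M'" unfolding psd_def
  proof
    fix x
    define b where "b = (\<Sum>j<n. M m j * x j)"
    define t where "t = - b / A"
    have "qf n M' x = qf n M x - (\<Sum>i<n. \<Sum>j<n. cnj (x i) * M i m * (cnj (M j m) * x j) / A)"
      unfolding qf_def M'_def by (simp add: sum_subtractf algebra_simps)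
    also have "(\<Sum>i<n. \<Sum>j<n. cnj (x i) * M i m * (cnj (M j m) * x j) / A) =
        (\<Sum>i<n. cnj (x i) * M i m) * (\<Sum>j<n. cnj (M j m) * x j) / A"
      by (simp add: sum_distrib_left sum_distrib_right sum_divide_distrib algebra_simps)
    also have "(\<Sum>j<n. cnj (M j m) * x j) = b"
      unfolding b_def
    proof (intro sum.cong refl)
      fix j assume "j \<in> {..<n}"
      then have "M m j = cnj (M j m)" using H m unfolding herm_def by blast
      then show "cnj (M j m) * x j = M m j * x j" by simp
    qed
    also have "(\<Sum>i<n. cnj (x i) * M i m) = cnj b"
      unfolding b_def cnj_sum
    proof (intro sum.cong refl)
      fix j assume "j \<in> {..<n}"
      then have "M j m = cnj (M m j)" using H m unfolding herm_def by blast
      then show "cnj (x j) * M j m = cnj (M m j * x j)" by (simp add: mult.commute)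
    qed
    finally have 1: "qf n M' x = qf n M x - cnj b * b / A" .
    have "qf n M (\<lambda>i. x i + (if i = m then t else 0)) = qf n M x + cnj t * b + t * cnj b + cnj t * t * A"
      using qf_shift[OF H m, of x t] Mmm b_def by simp
    also have "\<dots> = qf n M x - cnj b * b / A"
      unfolding t_def using Anz cA by (simp add: field_simps)
    finally have "qf n M' x = qf n M (\<lambda>i. x i + (if i = m then t else 0))" using 1 by simp
    then show "0 \<le> Re (qf n M' x)" using P unfolding psd_def by simp
  qed
qed


lemma qf_delta:
  assumes m: "m < n" shows "qf n M (\<lambda>i. if i = m then 1 else 0) = M m m"
proof -
  have "(\<Sum>j<n. cnj (if i = m then 1 else 0) * M i j * (if j = m then 1 else 0)) = (if i = m then M i m else 0)" for i
    using m by (cases "i = m") (simp_all add: if_distrib cong: if_cong)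
  then show ?thesis unfolding qf_def using m by simp
qed

lemma peel_step_zero:
  assumes H: "herm n M" and P: "psd n M" and m: "m < n" and a: "\<not> 0 < Re (M m m)" and j: "j < n"
  shows "M m j = 0"
proof (rule ccontr)
  assume nz: "M m j \<noteq> 0"
  have "M m m = cnj (M m m)" using H m unfolding herm_def by blast
  then have im: "Im (M m m) = 0" by (metis cnj.simps(2) neg_equal_zero)
  have "0 \<le> Re (qf n M (\<lambda>i. if i = m then 1 else 0))" using P unfolding psd_def by blast
  moreover have "qf n M (\<lambda>i. if i = m then 1 else 0) = M m m" by (rule qf_delta[OF m])
  ultimately have "Re (M m m) = 0" using a by simp
  with im have M0: "M m m = 0" by (simp add: complex_eq_iff)
  define b where "b = M m j"
  define x where "x = (\<lambda>i. if i = j then (1::complex) else 0)"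
  have bx: "(\<Sum>l<n. M m l * x l) = b" unfolding x_def b_def using j by (simp add: if_distrib cong: if_cong)
  have qx: "qf n M x = M j j" unfolding x_def by (rule qf_delta[OF j])
  define s where "s = (\<bar>Re (M j j)\<bar> + 1) / (2 * (cmod b)\<^sup>2)"
  define t where "t = - complex_of_real s * b"
  have bpos: "0 < (cmod b)\<^sup>2" using nz unfolding b_def by simp
  have q1: "qf n M (\<lambda>i. x i + (if i = m then t else 0)) = M j j + (cnj t * b + t * cnj b)"
    using qf_shift[OF H m, of x t] bx qx M0 by (simp add: add.assoc)
  have q2: "cnj t * b + t * cnj b = - complex_of_real (2 * s * (cmod b)\<^sup>2)"
  proof -
    have bb: "b * cnj b = (complex_of_real (cmod b))\<^sup>2" by (metis cnj_sq of_real_power)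
    show ?thesis unfolding t_def by (simp add: algebra_simps bb)
  qed
  have "Re (qf n M (\<lambda>i. x i + (if i = m then t else 0))) = Re (M j j) - 2 * s * (cmod b)\<^sup>2"
    unfolding q1 q2 by simp
  also have "2 * s * (cmod b)\<^sup>2 = \<bar>Re (M j j)\<bar> + 1" unfolding s_def using bpos by simp
  finally have "Re (qf n M (\<lambda>i. x i + (if i = m then t else 0))) < 0" by linarith
  then show False using P unfolding psd_def by (metis not_le)
qed

lemma peel:
  assumes "m + d = n"
  shows "herm n M \<Longrightarrow> psd n M \<Longrightarrow> (\<forall>i<n. \<forall>j<n. (i < m \<or> j < m) \<longrightarrow> M i j = 0) \<Longrightarrow>
    \<exists>w. \<forall>i<n. \<forall>j<n. M i j = (\<Sum>l\<in>{m..<n}. w l i * cnj (w l j))"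
  using assms
proof (induction d arbitrary: m M)
  case 0
  then show ?case by auto
next
  case (Suc d)
  have m: "m < n" using Suc.prems(4) by simp
  have H: "herm n M" and P: "psd n M" and Z: "\<forall>i<n. \<forall>j<n. (i < m \<or> j < m) \<longrightarrow> M i j = 0"
    using Suc.prems by auto
  have herm_at: "M i j = cnj (M j i)" if "i < n" "j < n" for i j using H that unfolding herm_def by blast
  show ?case
  proof (cases "0 < Re (M m m)")
    case True
    define A where "A = complex_of_real (Re (M m m))"
    define M' where "M' = (\<lambda>i j. M i j - M i m * cnj (M j m) / A)"
    have H': "herm n M'" and P': "psd n M'"
      using peel_step_pos[OF H P m True] unfolding M'_def A_def by auto
    have Mmm: "M m m = A"
    proof -
      have "Im (M m m) = 0" using herm_at[OF m m] by (metis cnj.simps(2) neg_equal_zero)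
      then show ?thesis unfolding A_def by (simp add: complex_eq_iff)
    qed
    have Anz: "A \<noteq> 0" using True unfolding A_def by (simp add: complex_eq_iff)
    have cA: "cnj A = A" unfolding A_def by simp
    have Z': "\<forall>i<n. \<forall>j<n. (i < Suc m \<or> j < Suc m) \<longrightarrow> M' i j = 0"
    proof (intro allI impI)
      fix i j assume i: "i < n" and j: "j < n" and ij: "i < Suc m \<or> j < Suc m"
      show "M' i j = 0"
      proof (cases "i < m \<or> j < m")
        case True
        then have "M i j = 0" "M i m = 0 \<or> M j m = 0" using Z i j m by auto
        then show ?thesis unfolding M'_def by auto
      next
        case False
        then have "i = m \<or> j = m" using ij by auto
        then show ?thesis
        proof
          assume "i = m"
          then show ?thesis unfolding M'_def using Mmm Anz herm_at[OF m j] by simp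
        next
          assume "j = m"
          then show ?thesis unfolding M'_def using Mmm Anz cA by simp
        qed
      qed
    qed
    obtain w where w: "\<forall>i<n. \<forall>j<n. M' i j = (\<Sum>l\<in>{Suc m..<n}. w l i * cnj (w l j))"
      using Suc.IH[OF H' P' Z'] Suc.prems(4) by auto
    define v where "v = (\<lambda>i. M i m / complex_of_real (sqrt (Re (M m m))))"
    have vv: "v i * cnj (v j) = M i m * cnj (M j m) / A" for i j
    proof -
      have "complex_of_real (sqrt (Re (M m m))) * complex_of_real (sqrt (Re (M m m))) = A"
        unfolding A_def using True by (simp flip: of_real_mult)
      then show ?thesis unfolding v_def by (simp add: field_simps)
    qed
    show ?thesis
    proof (intro exI allI impI)
      fix i j assume i: "i < n" and j: "j < n"
      have "(\<Sum>l\<in>{m..<n}. (w(m := v)) l i * cnj ((w(m := v)) l j))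
          = v i * cnj (v j) + (\<Sum>l\<in>{Suc m..<n}. w l i * cnj (w l j))"
        using m by (simp add: sum.atLeast_Suc_lessThan)
      also have "\<dots> = M i j"
      proof -
        have e: "M i j - M i m * cnj (M j m) / A = (\<Sum>l\<in>{Suc m..<n}. w l i * cnj (w l j))"
          using w i j unfolding M'_def by simp
        show ?thesis unfolding vv e[symmetric] by simp
      qed
      finally show "M i j = (\<Sum>l\<in>{m..<n}. (w(m := v)) l i * cnj ((w(m := v)) l j))" by simp
    qed
  next
    case False
    have Z': "\<forall>i<n. \<forall>j<n. (i < Suc m \<or> j < Suc m) \<longrightarrow> M i j = 0"
    proof (intro allI impI)
      fix i j assume i: "i < n" and j: "j < n" and ij: "i < Suc m \<or> j < Suc m"
      show "M i j = 0"
      proof (cases "i < m \<or> j < m")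
        case True then show ?thesis using Z i j by auto
      next
        case F: False
        then have "i = m \<or> j = m" using ij by auto
        then show ?thesis
        proof
          assume "i = m" then show ?thesis using peel_step_zero[OF H P m False j] by simp
        next
          assume "j = m" then show ?thesis using peel_step_zero[OF H P m False i] herm_at[OF i j] by simp
        qed
      qed
    qed
    obtain w where w: "\<forall>i<n. \<forall>j<n. M i j = (\<Sum>l\<in>{Suc m..<n}. w l i * cnj (w l j))"
      using Suc.IH[OF H P Z'] Suc.prems(4) by auto
    show ?thesis
    proof (intro exI allI impI)
      fix i j assume i: "i < n" and j: "j < n"
      have "(\<Sum>l\<in>{m..<n}. (w(m := (\<lambda>_. 0))) l i * cnj ((w(m := (\<lambda>_. 0))) l j))
          = (\<Sum>l\<in>{Suc m..<n}. w l i * cnj (w l j))"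
        using m by (simp add: sum.atLeast_Suc_lessThan)
      then show "M i j = (\<Sum>l\<in>{m..<n}. (w(m := (\<lambda>_. 0))) l i * cnj ((w(m := (\<lambda>_. 0))) l j))"
        using w i j by simp
    qed
  qed
qed

lemma decomp_exists:
  assumes D: "density_op n \<rho>"
  shows "\<exists>k p \<psi>. pure_decomp n \<rho> k p \<psi>"
proof -
  have \<rho>c: "\<rho> \<in> carrier_mat n n"
    and Hr: "\<forall>i<n. \<forall>j<n. \<rho> $$ (i, j) = cnj (\<rho> $$ (j, i))"
    and Pr: "\<forall>v \<in> carrier_vec n. 0 \<le> Re (\<Sum>i<n. \<Sum>j<n. cnj (v $ i) * \<rho> $$ (i, j) * v $ j)"
    and tr: "mtrace \<rho> = 1"
    using D[unfolded density_op_def] by blast+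
  have tr': "(\<Sum>i<n. \<rho> $$ (i,i)) = 1" using tr \<rho>c unfolding mtrace_def by simp
  then have n: "0 < n" by (cases n) auto
  define M where "M i j = \<rho> $$ (i,j)" for i j
  have H: "herm n M" unfolding herm_def M_def using Hr by blast
  have P: "psd n M" unfolding psd_def
  proof
    fix x
    have e: "qf n M x = (\<Sum>i<n. \<Sum>j<n. cnj (vec n x $ i) * \<rho> $$ (i, j) * vec n x $ j)"
      unfolding qf_def M_def by (intro sum.cong refl) simp
    show "0 \<le> Re (qf n M x)" unfolding e by (rule bspec[OF Pr]) simp
  qed
  obtain w where w: "\<forall>i<n. \<forall>j<n. M i j = (\<Sum>l\<in>{0..<n}. w l i * cnj (w l j))"
    using peel[of 0 n n M] H P by auto
  define pl where "pl l = (\<Sum>i<n. (cmod (w l i))\<^sup>2)" for l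
  define \<psi> where "\<psi> l = (if 0 < pl l then vec n (\<lambda>i. w l i / complex_of_real (sqrt (pl l))) else unit_vec n 0)" for l
  have pl_nn: "0 \<le> pl l" for l unfolding pl_def by (simp add: sum_nonneg)
  have w0: "w l i = 0" if "pl l = 0" "i < n" for l i
  proof -
    have "(cmod (w l i))\<^sup>2 = 0"
      using that sum_nonneg_eq_0_iff[of "{..<n}" "\<lambda>i. (cmod (w l i))\<^sup>2"] unfolding pl_def by auto
    then show ?thesis by simp
  qed
  have psi_ent: "\<psi> l $ i = w l i / complex_of_real (sqrt (pl l))" if "0 < pl l" "i < n" for l i
    using that by (simp add: \<psi>_def)
  have psi_c: "\<psi> l \<in> carrier_vec n" for l by (simp add: \<psi>_def)
  have psi_norm: "(\<Sum>i<n. (cmod (\<psi> l $ i))\<^sup>2) = 1" for l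
  proof (cases "0 < pl l")
    case True
    then have "(\<Sum>i<n. (cmod (\<psi> l $ i))\<^sup>2) = (\<Sum>i<n. (cmod (w l i))\<^sup>2 / pl l)"
      using pl_nn[of l] by (intro sum.cong refl) (simp add: psi_ent norm_divide power_divide)
    also have "\<dots> = 1" using True by (simp add: sum_divide_distrib[symmetric] pl_def)
    finally show ?thesis .
  next
    case False
    then have "(\<Sum>i<n. (cmod (\<psi> l $ i))\<^sup>2) = (\<Sum>i<n. if i = 0 then 1 else 0)"
      by (intro sum.cong refl) (simp add: \<psi>_def)
    then show ?thesis using n by simp
  qed
  have trm: "complex_of_real (pl l) * (\<psi> l $ r * cnj (\<psi> l $ c)) = w l r * cnj (w l c)"
    if r: "r < n" and c: "c < n" for l r c
  proof (cases "0 < pl l")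
    case True
    have s: "complex_of_real (sqrt (pl l)) * complex_of_real (sqrt (pl l)) = complex_of_real (pl l)"
      using pl_nn[of l] by (simp flip: of_real_mult)
    have nz: "complex_of_real (sqrt (pl l)) \<noteq> 0" using True by simp
    show ?thesis using nz r c True
      by (simp add: psi_ent s[symmetric] field_simps)
  next
    case False
    then have "pl l = 0" using pl_nn[of l] by simp
    then show ?thesis using w0 r by simp
  qed
  have "pure_decomp n \<rho> n pl \<psi>"
    unfolding pure_decomp_def
  proof (intro conjI allI impI)
    fix l assume "l < n"
    show "0 \<le> pl l" by (rule pl_nn)
    show "\<psi> l \<in> carrier_vec n" by (rule psi_c)
    show "(\<Sum>j<n. (cmod (\<psi> l $ j))\<^sup>2) = 1" by (rule psi_norm)
  next
    have "complex_of_real (\<Sum>l<n. pl l) = (\<Sum>l<n. \<Sum>i<n. w l i * cnj (w l i))"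
      unfolding pl_def by (simp add: cnj_sq)
    also have "\<dots> = (\<Sum>i<n. \<rho> $$ (i,i))"
      by (subst sum.swap) (intro sum.cong refl, simp add: w[rule_format] M_def[symmetric] lessThan_atLeast0)
    finally show "(\<Sum>l<n. pl l) = 1" using tr' by (metis of_real_eq_1_iff)
  next
    show "\<rho> = mat n n (\<lambda>(r, c). \<Sum>i<n. complex_of_real (pl i) * proj n (\<psi> i) $$ (r, c))"
    proof (rule eq_matI)
      fix r c assume "r < dim_row (mat n n (\<lambda>(r, c). \<Sum>i<n. complex_of_real (pl i) * proj n (\<psi> i) $$ (r, c)))"
        "c < dim_col (mat n n (\<lambda>(r, c). \<Sum>i<n. complex_of_real (pl i) * proj n (\<psi> i) $$ (r, c)))"
      then have r: "r < n" and c: "c < n" by auto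
      have "\<rho> $$ (r,c) = (\<Sum>l<n. w l r * cnj (w l c))"
        using w r c unfolding M_def by (simp add: lessThan_atLeast0)
      also have "\<dots> = (\<Sum>l<n. complex_of_real (pl l) * proj n (\<psi> l) $$ (r, c))"
        using r c by (intro sum.cong refl) (simp add: proj_def trm)
      finally show "\<rho> $$ (r,c) = mat n n (\<lambda>(r, c). \<Sum>i<n. complex_of_real (pl i) * proj n (\<psi> i) $$ (r, c)) $$ (r,c)"
        using r c by simp
    qed (use \<rho>c in simp_all)
  qed
  then show ?thesis by (intro exI)
qed

lemma ent_nonneg:
  assumes "\<psi> \<in> carrier_vec m" "(\<Sum>r<m. (cmod (\<psi> $ r))\<^sup>2) = 1"
  shows "0 \<le> vn_entropy (dephase (proj m \<psi>))"
proof -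
  have "eta ((cmod (\<psi> $ r))\<^sup>2) \<le> 0" if "r < m" for r
  proof (rule eta_nonpos)
    show "0 \<le> (cmod (\<psi> $ r))\<^sup>2" by simp
    have "(cmod (\<psi> $ r))\<^sup>2 \<le> (\<Sum>r<m. (cmod (\<psi> $ r))\<^sup>2)"
      by (rule member_le_sum) (use that in auto)
    then show "(cmod (\<psi> $ r))\<^sup>2 \<le> 1" using assms(2) by simp
  qed
  then have "(\<Sum>r<m. eta ((cmod (\<psi> $ r))\<^sup>2)) \<le> 0" by (intro sum_nonpos) auto
  then show ?thesis using vn_dephase[OF assms(1)] by simp
qed

lemma entA_nonneg:
  fixes dA dB :: nat
  assumes "\<psi> \<in> carrier_vec (dA*dB)" "(\<Sum>r<dA*dB. (cmod (\<psi> $ r))\<^sup>2) = 1"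
  shows "0 \<le> vn_entropy (dephase_A dA dB (proj (dA*dB) \<psi>))"
proof -
  define q where "q a = (\<Sum>b<dB. (cmod (\<psi> $ (a*dB+b)))\<^sup>2)" for a
  have qs: "(\<Sum>a<dA. q a) = 1" unfolding q_def norm_sum_blocks using assms(2) .
  have "eta (q a) \<le> 0" if "a < dA" for a
  proof (rule eta_nonpos)
    show q0: "0 \<le> q a" unfolding q_def by (simp add: sum_nonneg)
    have "q a \<le> (\<Sum>a<dA. q a)"
      by (rule member_le_sum) (use that in \<open>auto simp: q_def sum_nonneg\<close>)
    then show "q a \<le> 1" using qs by simp
  qed
  then have "(\<Sum>a<dA. eta (q a)) \<le> 0" by (intro sum_nonpos) auto
  then show ?thesis using vn_dephaseA[OF assms(1)] unfolding q_def by simp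
qed

theorem lemma3:
  fixes dA dB :: nat and \<rho> :: "complex mat"
  assumes "density_op (dA * dB) \<rho>"
  shows "Cf (dA * dB) \<rho> \<ge> Cf_AB dA dB \<rho> + Cf dB (ptrace_A dA dB \<rho>)"
proof -
  define S where "S = {(\<Sum>i<k. p i * vn_entropy (dephase (proj (dA*dB) (\<psi> i)))) | k p \<psi>. pure_decomp (dA*dB) \<rho> k p \<psi>}"
  define T where "T = {(\<Sum>i<k. p i * vn_entropy (dephase_A dA dB (proj (dA * dB) (\<psi> i)))) | k p \<psi>.
       pure_decomp (dA * dB) \<rho> k p \<psi>}"
  define U where "U = {(\<Sum>i<k. p i * vn_entropy (dephase (proj dB (\<psi> i)))) | k p \<psi>. pure_decomp dB (ptrace_A dA dB \<rho>) k p \<psi>}"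
  have tr: "mtrace \<rho> = 1" and \<rho>c: "\<rho> \<in> carrier_mat (dA*dB) (dA*dB)"
    using assms unfolding density_op_def by blast+
  have "dA * dB \<noteq> 0"
  proof
    assume "dA * dB = 0"
    then have "dim_row \<rho> = 0" using \<rho>c by simp
    then have "mtrace \<rho> = 0" unfolding mtrace_def by simp
    then show False using tr by simp
  qed
  then have dA: "0 < dA" and dB: "0 < dB" by auto
  obtain k0 p0 \<psi>0 where D0: "pure_decomp (dA*dB) \<rho> k0 p0 \<psi>0" using decomp_exists[OF assms] by blast
  have Sne: "S \<noteq> {}" unfolding S_def using D0 by blast
  have bT: "bdd_below T" unfolding bdd_below_def
  proof (intro exI ballI)
    fix t assume "t \<in> T"
    then obtain k p \<psi> where D: "pure_decomp (dA*dB) \<rho> k p \<psi>"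
      and t: "t = (\<Sum>i<k. p i * vn_entropy (dephase_A dA dB (proj (dA * dB) (\<psi> i))))"
      unfolding T_def by blast
    show "0 \<le> t" unfolding t
      using D unfolding pure_decomp_def by (intro sum_nonneg mult_nonneg_nonneg entA_nonneg) auto
  qed
  have bU: "bdd_below U" unfolding bdd_below_def
  proof (intro exI ballI)
    fix u assume "u \<in> U"
    then obtain k p \<psi> where D: "pure_decomp dB (ptrace_A dA dB \<rho>) k p \<psi>"
      and u: "u = (\<Sum>i<k. p i * vn_entropy (dephase (proj dB (\<psi> i))))"
      unfolding U_def by blast
    show "0 \<le> u" unfolding u
      using D unfolding pure_decomp_def by (intro sum_nonneg mult_nonneg_nonneg ent_nonneg) auto
  qed
  have "Inf T + Inf U \<le> Inf S"
  proof (rule cInf_greatest[OF Sne])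
    fix s assume "s \<in> S"
    then obtain k p \<psi> where D: "pure_decomp (dA*dB) \<rho> k p \<psi>"
      and s: "s = (\<Sum>i<k. p i * vn_entropy (dephase (proj (dA*dB) (\<psi> i))))"
      unfolding S_def by blast
    obtain k' p' \<psi>' where D': "pure_decomp dB (ptrace_A dA dB \<rho>) k' p' \<psi>'"
      and eq: "(\<Sum>i<k. p i * vn_entropy (dephase (proj (dA*dB) (\<psi> i)))) =
     (\<Sum>i<k. p i * vn_entropy (dephase_A dA dB (proj (dA*dB) (\<psi> i)))) +
     (\<Sum>i<k'. p' i * vn_entropy (dephase (proj dB (\<psi>' i))))"
      using decomp_split[OF dA dB D] by blast
    have tT: "(\<Sum>i<k. p i * vn_entropy (dephase_A dA dB (proj (dA*dB) (\<psi> i)))) \<in> T"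
      unfolding T_def using D by blast
    have uU: "(\<Sum>i<k'. p' i * vn_entropy (dephase (proj dB (\<psi>' i)))) \<in> U"
      unfolding U_def using D' by blast
    show "Inf T + Inf U \<le> s" unfolding s eq
      using cInf_lower[OF tT bT] cInf_lower[OF uU bU] by linarith
  qed
  then show ?thesis unfolding Cf_def Cf_AB_def S_def T_def U_def by simp
qed

end
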